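(* Let $\mathbf{u}=(u_1,\dots,u_n)$ be a utility profile over $C$, let $R\in\{R^C,R^V\}$, and suppose that $W(\mathbf{a})=\{c_j\}$ for some $c_j\in C$, where $\mathbf{a}$ is the truthful ballot vector. Then $\mathbf{a}$ is a PNE of the game $G=(\mathcal{T},R,\mathbf{u})$ if and only if for every $i\in N$ and every $c_k\in H(\mathbf{a})\setminus\{a_i\}$ it holds that $c_j\succ_i c_k$.
   Context: Let $C=\{c_1,\dots,c_m\}$ be candidates and $N=\{1,\dots,n\}$ voters, each with an injective utility function $u_i:C\to\mathbb{N}$ inducing $c\succ_i c'$ iff $u_i(c)>u_i(c')$; $a_i$ is $i$'s top candidate and $\mathbf{a}=(a_1,\dots,a_n)$. A ballot vector is $\mathbf{b}=(b_1,\dots,b_n)$ with $b_i\in C\cup\{\bot\}$ ($\bot$ = abstain); $(\mathbf{b}_{-i},b')$ replaces $b_i$ by $b'$. $\mathrm{sc}(c,\mathbf{b})=|\{i:b_i=c\}|$, $M(\mathbf{b})=\max_c\mathrm{sc}(c,\mathbf{b})$, $W(\mathbf{b})=\{c:\mathrm{sc}(c,\mathbf{b})=M(\mathbf{b})\}$, $H(\mathbf{b})=\{c:\mathrm{sc}(c,\mathbf{b})=M(\mathbf{b})-1\}$. If $|W(\mathbf{b})|=1$ its element wins; otherwise under $R^C$ the winner is uniform on $W(\mathbf{b})$, and under $R^V$ a uniformly random voter $i\in N$ is chosen and the winner is $b_i$ if $b_i\in W(\mathbf{b})$, else $i$'s most preferred candidate in $W(\mathbf{b})$. Let $p_j(\mathbf{b})$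 be the probability $c_j$ wins. Fix $0<\varepsilon<\min\{1/m,1/n\}$. In the truth-biased setting $\mathcal{T}$, voter $i$'s utility is $U_i(\mathbf{b})=\sum_jp_j(\mathbf{b})u_i(c_j)$ if $b_i\in C\setminus\{a_i\}$, that plus $\varepsilon$ if $b_i=a_i$, and $-\infty$ if $b_i=\bot$. The game $(\mathcal{T},R,\mathbf{u})$ has players $N$ with action sets $C\cup\{\bot\}$; a PNE is a ballot vector $\mathbf{b}$ with $U_i(\mathbf{b})\ge U_i(\mathbf{b}_{-i},b')$ for all $i$ and $b'$. *)

theory Defs
  imports Complex_Main "HOL-Library.Extended_Real"
begin

text \<open>Voters are a finite set N of type 'v, candidates a finite set C of type 'c.
  A ballot vector is b :: 'v => 'c option, None = abstain (bottom).
  Utilities u :: 'v => 'c => nat.\<close>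

datatype tie_rule = RC | RV

definition sc :: "'v set \<Rightarrow> ('v \<Rightarrow> 'c option) \<Rightarrow> 'c \<Rightarrow> nat" where
  "sc N b c = card {i \<in> N. b i = Some c}"

definition maxsc :: "'c set \<Rightarrow> 'v set \<Rightarrow> ('v \<Rightarrow> 'c option) \<Rightarrow> nat" where
  "maxsc C N b = Max (sc N b ` C)"

definition Wset :: "'c set \<Rightarrow> 'v set \<Rightarrow> ('v \<Rightarrow> 'c option) \<Rightarrow> 'c set" where
  "Wset C N b = {c \<in> C. sc N b c = maxsc C N b}"

definition Hset :: "'c set \<Rightarrow> 'v set \<Rightarrow> ('v \<Rightarrow> 'c option) \<Rightarrow> 'c set" where
  "Hset C N b = {c \<in> C. int (sc N b c) = int (maxsc C N b) - 1}"

definition fav :: "('v \<Rightarrow> 'c \<Rightarrow> nat) \<Rightarrow> 'v \<Rightarrow> 'c set \<Rightarrow> 'c" where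
  "fav u i S = (THE c. c \<in> S \<and> (\<forall>c' \<in> S. u i c' \<le> u i c))"

definition top :: "('v \<Rightarrow> 'c \<Rightarrow> nat) \<Rightarrow> 'c set \<Rightarrow> 'v \<Rightarrow> 'c" where
  "top u C i = fav u i C"

definition truthful :: "('v \<Rightarrow> 'c \<Rightarrow> nat) \<Rightarrow> 'c set \<Rightarrow> 'v \<Rightarrow> 'c option" where
  "truthful u C = (\<lambda>i. Some (top u C i))"

text \<open>Under R^V: winner when voter i is drawn.\<close>
definition rv_choice :: "('v \<Rightarrow> 'c \<Rightarrow> nat) \<Rightarrow> 'c set \<Rightarrow> 'v set \<Rightarrow> ('v \<Rightarrow> 'c option) \<Rightarrow> 'v \<Rightarrow> 'c" where
  "rv_choice u C N b i =
     (case b i of Some c \<Rightarrow> if c \<in> Wset C N b then c else fav u i (Wset C N b)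
                | None \<Rightarrow> fav u i (Wset C N b))"

definition win_prob :: "tie_rule \<Rightarrow> ('v \<Rightarrow> 'c \<Rightarrow> nat) \<Rightarrow> 'c set \<Rightarrow> 'v set \<Rightarrow> ('v \<Rightarrow> 'c option) \<Rightarrow> 'c \<Rightarrow> real" where
  "win_prob R u C N b c =
     (if card (Wset C N b) = 1 then (if c \<in> Wset C N b then 1 else 0)
      else (case R of
              RC \<Rightarrow> (if c \<in> Wset C N b then 1 / real (card (Wset C N b)) else 0)
            | RV \<Rightarrow> real (card {i \<in> N. rv_choice u C N b i = c}) / real (card N)))"

definition exp_util :: "tie_rule \<Rightarrow> ('v \<Rightarrow> 'c \<Rightarrow> nat) \<Rightarrow> 'c set \<Rightarrow> 'v set \<Rightarrow> ('v \<Rightarrow> 'c option) \<Rightarrow> 'v \<Rightarrow> real" where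
  "exp_util R u C N b i = (\<Sum>c\<in>C. win_prob R u C N b c * real (u i c))"

definition tb_util :: "real \<Rightarrow> tie_rule \<Rightarrow> ('v \<Rightarrow> 'c \<Rightarrow> nat) \<Rightarrow> 'c set \<Rightarrow> 'v set \<Rightarrow> ('v \<Rightarrow> 'c option) \<Rightarrow> 'v \<Rightarrow> ereal" where
  "tb_util eps R u C N b i =
     (case b i of None \<Rightarrow> -\<infinity>
        | Some c \<Rightarrow> ereal (exp_util R u C N b i + (if c = top u C i then eps else 0)))"

definition is_PNE :: "real \<Rightarrow> tie_rule \<Rightarrow> ('v \<Rightarrow> 'c \<Rightarrow> nat) \<Rightarrow> 'c set \<Rightarrow> 'v set \<Rightarrow> ('v \<Rightarrow> 'c option) \<Rightarrow> bool" where
  "is_PNE eps R u C N b \<longleftrightarrow>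
     (\<forall>i \<in> N. \<forall>b' \<in> Some ` C \<union> {None}.
        tb_util eps R u C N (b(i := b')) i \<le> tb_util eps R u C N b i)"

end

theory Submission
  imports Defs
begin

lemma fav_prop:
  assumes "finite S" "S \<noteq> {}" "S \<subseteq> C" "inj_on (u i) C"
  shows "fav u i S \<in> S \<and> (\<forall>c'\<in>S. u i c' \<le> u i (fav u i S))"
proof -
  have "Max (u i ` S) \<in> u i ` S" using assms by simp
  then obtain c where c: "c \<in> S" "u i c = Max (u i ` S)" by auto
  have cm: "\<forall>c'\<in>S. u i c' \<le> u i c" using c assms(1) by simp
  have "fav u i S = c" unfolding fav_def
  proof (rule the_equality)
    show "c \<in> S \<and> (\<forall>c'\<in>S. u i c' \<le> u i c)" using c cm by simp
  next
    fix x assume x: "x \<in> S \<and> (\<forall>c'\<in>S. u i c' \<le> u i x)"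
    then have "u i x = u i c" using cm c by (meson le_antisym)
    then show "x = c" using assms(3,4) x c inj_onD by (metis subsetD)
  qed
  then show ?thesis using c cm by simp
qed

lemma card_split:
  assumes "finite N" "i \<in> N"
  shows "card {k \<in> N. P k} = card {k \<in> N - {i}. P k} + (if P i then 1 else 0)"
proof (cases "P i")
  case True
  then have "{k \<in> N. P k} = insert i {k \<in> N - {i}. P k}" using assms by auto
  then show ?thesis using True assms by simp
next
  case False
  then have "{k \<in> N. P k} = {k \<in> N - {i}. P k}" using assms by auto
  then show ?thesis using False by simp
qed

lemma sc_upd:
  assumes "finite N" "i \<in> N"
  shows "int (sc N (b(i:=Some c)) d) = int (sc N b d) - (if b i = Some d then 1 else 0)
     + (if c = d then 1 else 0)"
proof -
  have 1: "sc N (b(i:=Some c)) d = card {k \<in> N - {i}. b k = Some d} + (if c = d then 1 else 0)"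
    unfolding sc_def using card_split[OF assms, of "\<lambda>k. (b(i:=Some c)) k = Some d"]
    by (auto intro!: arg_cong[where f=card])
  have 2: "sc N b d = card {k \<in> N - {i}. b k = Some d} + (if b i = Some d then 1 else 0)"
    unfolding sc_def using card_split[OF assms, of "\<lambda>k. b k = Some d"] by simp
  show ?thesis using 1 2 by simp
qed

lemma sc_le_max:
  assumes "finite C" "d \<in> C"
  shows "sc N b d \<le> maxsc C N b"
  unfolding maxsc_def using assms by simp

lemma maxsc_eq:
  assumes "finite C" "x \<in> C" "sc N b x = m" "\<forall>d\<in>C. sc N b d \<le> m"
  shows "maxsc C N b = m"
  unfolding maxsc_def using assms by (intro Max_eqI) auto

lemma W_ne:
  assumes "finite C" "C \<noteq> {}"
  shows "Wset C N b \<noteq> {}"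
proof -
  have "maxsc C N b \<in> sc N b ` C" unfolding maxsc_def using assms by simp
  then show ?thesis unfolding Wset_def by auto
qed

lemma rv_in:
  assumes "finite C" "C \<noteq> {}" "k \<in> N" "\<And>k. k \<in> N \<Longrightarrow> inj_on (u k) C"
  shows "rv_choice u C N b k \<in> Wset C N b"
proof -
  have f: "fav u k (Wset C N b) \<in> Wset C N b"
    using fav_prop[of "Wset C N b" C u k] W_ne[OF assms(1,2)] assms
    by (auto simp: Wset_def)
  show ?thesis unfolding rv_choice_def using f by (cases "b k") auto
qed

lemma exp_unique:
  assumes "finite C" "Wset C N b = {w}" "w \<in> C"
  shows "exp_util R u C N b i = real (u i w)"
proof -
  have "exp_util R u C N b i = (\<Sum>c\<in>C. if c = w then real (u i c) else 0)"
    unfolding exp_util_def win_prob_def using assms by (intro sum.cong) auto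
  also have "\<dots> = real (u i w)" using assms by (simp add: sum.delta')
  finally show ?thesis .
qed

lemma exp_RC:
  assumes "finite C" "card (Wset C N b) \<noteq> 1"
  shows "exp_util RC u C N b i = (\<Sum>c\<in>Wset C N b. real (u i c)) / real (card (Wset C N b))"
proof -
  have W: "C \<inter> Wset C N b = Wset C N b" by (auto simp: Wset_def)
  have "exp_util RC u C N b i = (\<Sum>c\<in>C. if c \<in> Wset C N b then real (u i c) / real (card (Wset C N b)) else 0)"
    unfolding exp_util_def win_prob_def using assms by (intro sum.cong) auto
  also have "\<dots> = (\<Sum>c\<in>Wset C N b. real (u i c) / real (card (Wset C N b)))"
    using sum.inter_restrict[OF assms(1), symmetric] W by metis
  finally show ?thesis by (simp add: sum_divide_distrib)
qed

lemma exp_RV: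
  assumes "finite C" "finite N" "card (Wset C N b) \<noteq> 1"
    and "\<And>k. k \<in> N \<Longrightarrow> rv_choice u C N b k \<in> C"
  shows "exp_util RV u C N b i = (\<Sum>k\<in>N. real (u i (rv_choice u C N b k))) / real (card N)"
proof -
  let ?r = "rv_choice u C N b"
  have "exp_util RV u C N b i = (\<Sum>c\<in>C. real (card {k \<in> N. ?r k = c}) * real (u i c)) / real (card N)"
    unfolding exp_util_def win_prob_def using assms by (simp add: sum_divide_distrib)
  also have "(\<Sum>c\<in>C. real (card {k \<in> N. ?r k = c}) * real (u i c))
      = (\<Sum>c\<in>C. \<Sum>k\<in>{k \<in> N. ?r k = c}. real (u i (?r k)))"
    by (intro sum.cong) auto
  also have "\<dots> = (\<Sum>k\<in>N. real (u i (?r k)))"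
    using assms by (intro sum.group) auto
  finally show ?thesis .
qed

lemma exp_le:
  assumes "finite C" "C \<noteq> {}" "finite N" "N \<noteq> {}" "\<And>k. k \<in> N \<Longrightarrow> inj_on (u k) C"
    and "\<forall>w\<in>Wset C N b. real (u i w) \<le> U"
  shows "exp_util R u C N b i \<le> U"
proof (cases "card (Wset C N b) = 1")
  case True
  then obtain w where w: "Wset C N b = {w}" by (metis card_1_singletonE)
  then have "w \<in> C" by (auto simp: Wset_def)
  then show ?thesis using exp_unique[OF assms(1) w] assms(6) w by simp
next
  case False
  have fW: "finite (Wset C N b)" using assms(1) by (auto simp: Wset_def)
  have Wne: "Wset C N b \<noteq> {}" using W_ne[OF assms(1,2)] by blast
  then have cpos: "real (card (Wset C N b)) > 0" using fW by (simp add: card_gt_0_iff)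
  show ?thesis
  proof (cases R)
    case RC
    have "(\<Sum>c\<in>Wset C N b. real (u i c)) \<le> (\<Sum>c\<in>Wset C N b. U)"
      using assms(6) by (intro sum_mono) auto
    then have "(\<Sum>c\<in>Wset C N b. real (u i c)) \<le> real (card (Wset C N b)) * U" by simp
    then have "(\<Sum>c\<in>Wset C N b. real (u i c)) \<le> U * real (card (Wset C N b))" by (metis mult.commute)
    then show ?thesis using exp_RC[OF assms(1) False] RC cpos by (simp only: pos_divide_le_eq)
  next
    case RV
    have rin: "\<And>k. k \<in> N \<Longrightarrow> rv_choice u C N b k \<in> Wset C N b"
      by (rule rv_in[OF assms(1,2) _ assms(5)])
    then have rC: "\<And>k. k \<in> N \<Longrightarrow> rv_choice u C N b k \<in> C" by (auto simp: Wset_def)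
    have "(\<Sum>k\<in>N. real (u i (rv_choice u C N b k))) \<le> (\<Sum>k\<in>N. U)"
      using assms(6) rin by (intro sum_mono) auto
    then have "(\<Sum>k\<in>N. real (u i (rv_choice u C N b k))) \<le> real (card N) * U" by simp
    then have "(\<Sum>k\<in>N. real (u i (rv_choice u C N b k))) \<le> U * real (card N)" by (metis mult.commute)
    moreover have "real (card N) > 0" using assms(3,4) by (simp add: card_gt_0_iff)
    ultimately show ?thesis using exp_RV[OF assms(1,3) False rC] RV
      by (simp only: pos_divide_le_eq)
  qed
qed

theorem theorem5:
  fixes C :: "'c set" and N :: "'v set" and u :: "'v \<Rightarrow> 'c \<Rightarrow> nat"
    and R :: tie_rule and eps :: real and cj :: 'c
  assumes "finite C" "C \<noteq> {}" "finite N" "N \<noteq> {}"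
    and "\<And>i. i \<in> N \<Longrightarrow> inj_on (u i) C"
    and "0 < eps" "eps < 1 / real (card C)" "eps < 1 / real (card N)"
    and "cj \<in> C"
    and "Wset C N (truthful u C) = {cj}"
  shows "is_PNE eps R u C N (truthful u C) \<longleftrightarrow>
    (\<forall>i \<in> N. \<forall>ck \<in> Hset C N (truthful u C) - {top u C i}. u i ck < u i cj)"
proof -
  note fC = assms(1) and CNE = assms(2) and fN = assms(3) and NNE = assms(4)
    and inj = assms(5) and epos = assms(6) and eC = assms(7) and eN = assms(8)
    and cjC = assms(9) and Wa = assms(10)
  define a where "a = truthful u C"
  have aA: "\<And>i. a i = Some (top u C i)" by (simp add: a_def truthful_def)
  have topC: "\<And>i. i \<in> N \<Longrightarrow> top u C i \<in> C \<and> (\<forall>c\<in>C. u i c \<le> u i (top u C i))"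
  proof -
    fix i assume i: "i \<in> N"
    show "top u C i \<in> C \<and> (\<forall>c\<in>C. u i c \<le> u i (top u C i))"
      unfolding top_def using fav_prop[of C C u i, OF fC CNE order_refl inj[OF i]] by simp
  qed
  define M where "M = maxsc C N a"
  have "cj \<in> Wset C N a" using Wa a_def by simp
  then have scj: "sc N a cj = M" unfolding M_def Wset_def by simp
  have lt: "\<And>d. d \<in> C \<Longrightarrow> d \<noteq> cj \<Longrightarrow> sc N a d < M"
  proof -
    fix d assume d: "d \<in> C" "d \<noteq> cj"
    have "sc N a d \<le> M" unfolding M_def by (rule sc_le_max[OF fC d(1)])
    moreover have "d \<notin> Wset C N a" using Wa a_def d by simp
    then have "sc N a d \<noteq> M" unfolding M_def Wset_def using d by simp
    ultimately show "sc N a d < M" by simp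
  qed
  obtain i0 where i0: "i0 \<in> N" using NNE by blast
  have ne: "{k \<in> N. a k = Some (top u C i0)} \<noteq> {}" using i0 aA by auto
  have fin: "finite {k \<in> N. a k = Some (top u C i0)}" using fN by simp
  have "card {k \<in> N. a k = Some (top u C i0)} > 0" using ne fin card_gt_0_iff by blast
  then have "sc N a (top u C i0) \<ge> 1" unfolding sc_def by simp
  moreover have "sc N a (top u C i0) \<le> M" unfolding M_def using sc_le_max[OF fC] topC[OF i0] by blast
  ultimately have M1: "M \<ge> 1" by simp
  have Hc: "\<And>c. c \<in> Hset C N a \<longleftrightarrow> c \<in> C \<and> sc N a c + 1 = M"
    unfolding Hset_def M_def[symmetric] using M1 by auto
  have cjH: "cj \<notin> Hset C N a" using Hc scj by simp
  have ta: "\<And>i. i \<in> N \<Longrightarrow> tb_util eps R u C N a i = ereal (real (u i cj) + eps)"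
    unfolding tb_util_def using aA exp_unique[OF fC Wa[folded a_def] cjC] by simp
  have scu: "\<And>i c d. i \<in> N \<Longrightarrow> int (sc N (a(i:=Some c)) d)
      = int (sc N a d) - (if top u C i = d then 1 else 0) + (if c = d then 1 else 0)"
  proof -
    fix i c d assume i: "i \<in> N"
    show "int (sc N (a(i:=Some c)) d)
      = int (sc N a d) - (if top u C i = d then 1 else 0) + (if c = d then 1 else 0)"
      using sc_upd[OF fN i, of a c d] aA[of i] by simp
  qed
  show ?thesis unfolding a_def[symmetric]
  proof
    assume P: "is_PNE eps R u C N a"
    show "\<forall>i \<in> N. \<forall>ck \<in> Hset C N a - {top u C i}. u i ck < u i cj"
    proof (intro ballI)
      fix i ck assume i: "i \<in> N" and ck: "ck \<in> Hset C N a - {top u C i}"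
      have ckC: "ck \<in> C" and sck: "sc N a ck + 1 = M" and cki: "ck \<noteq> top u C i"
        using ck Hc by auto
      have ckj: "ck \<noteq> cj" using ck cjH by blast
      show "u i ck < u i cj"
      proof (rule ccontr)
        assume "\<not> u i ck < u i cj"
        then have "u i cj \<le> u i ck" by simp
        moreover have "u i cj \<noteq> u i ck" using inj[OF i] ckC cjC ckj inj_onD by metis
        ultimately have gt: "u i cj < u i ck" by simp
        have tij: "top u C i \<noteq> cj" using topC[OF i] ckC gt by (metis leD)
        define b where "b = a(i := Some ck)"
        have sbj: "sc N b cj = M" using scu[OF i, of ck cj] scj tij ckj unfolding b_def by simp
        have sbk: "sc N b ck = M" using scu[OF i, of ck ck] sck cki unfolding b_def by simp
        have sbo: "\<And>d. d \<in> C \<Longrightarrow> d \<noteq> cj \<Longrightarrow> d \<noteq> ck \<Longrightarrow> sc N b d < M"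
        proof -
          fix d assume d: "d \<in> C" "d \<noteq> cj" "d \<noteq> ck"
          have "int (sc N b d) \<le> int (sc N a d)" using scu[OF i, of ck d] d unfolding b_def by simp
          then show "sc N b d < M" using lt[OF d(1,2)] by simp
        qed
        have mb: "maxsc C N b = M"
          by (rule maxsc_eq[OF fC cjC sbj]) (metis sbo sbj sbk order_refl less_imp_le)
        have Wb: "Wset C N b = {cj, ck}"
          unfolding Wset_def mb
        proof (intro equalityI subsetI)
          fix x assume "x \<in> {c \<in> C. sc N b c = M}"
          then have x: "x \<in> C" "sc N b x = M" by auto
          show "x \<in> {cj, ck}"
          proof (rule ccontr)
            assume "x \<notin> {cj, ck}"
            then have "sc N b x < M" using sbo[OF x(1)] by simp
            then show False using x(2) by simp
          qed
        next
          fix x assume "x \<in> {cj, ck}"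
          then show "x \<in> {c \<in> C. sc N b c = M}" using sbj sbk cjC ckC by auto
        qed
        have cW: "card (Wset C N b) = 2" using Wb ckj by simp
        have C2: "card C \<ge> 2"
        proof -
          have "card {cj, ck} \<le> card C" using cjC ckC fC by (intro card_mono) auto
          then show ?thesis using ckj by simp
        qed
        have big: "exp_util R u C N b i > real (u i cj) + eps"
        proof (cases R)
          case RC
          have e: "exp_util R u C N b i = (real (u i cj) + real (u i ck)) / 2"
            using exp_RC[OF fC, of N b u i] cW Wb ckj RC by simp
          have "eps < 1/2"
          proof -
            have "1 / real (card C) \<le> 1/2" using C2 by (simp add: divide_simps)
            then show ?thesis using eC by linarith
          qed
          moreover have "real (u i cj) + 1 \<le> real (u i ck)" using gt by linarith
          moreover have "(real (u i cj) + real (u i ck)) / 2 \<ge> real (u i cj) + 1/2"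
            using \<open>real (u i cj) + 1 \<le> real (u i ck)\<close> by (simp add: field_simps)
          ultimately show ?thesis using e by linarith
        next
          case RV
          have rin: "\<And>k. k \<in> N \<Longrightarrow> rv_choice u C N b k \<in> Wset C N b"
            by (rule rv_in[OF fC CNE _ inj])
          then have rC: "\<And>k. k \<in> N \<Longrightarrow> rv_choice u C N b k \<in> C" by (auto simp: Wset_def)
          have bi: "b i = Some ck" unfolding b_def by simp
          have ri: "rv_choice u C N b i = ck" unfolding rv_choice_def using Wb bi by simp
          have ge: "\<And>k. k \<in> N \<Longrightarrow> real (u i cj) \<le> real (u i (rv_choice u C N b k))"
          proof -
            fix k assume "k \<in> N"
            then have "rv_choice u C N b k \<in> {cj, ck}" using rin Wb by blast
            then show "real (u i cj) \<le> real (u i (rv_choice u C N b k))" using gt by auto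
          qed
          let ?S = "\<Sum>k\<in>N. real (u i (rv_choice u C N b k))"
          have s1: "?S = real (u i (rv_choice u C N b i)) + (\<Sum>k\<in>N-{i}. real (u i (rv_choice u C N b k)))"
            using fN i by (simp add: sum.remove)
          have s2: "(\<Sum>k\<in>N-{i}. real (u i (rv_choice u C N b k))) \<ge> (\<Sum>k\<in>N-{i}. real (u i cj))"
            using ge by (intro sum_mono) auto
          have s3: "(\<Sum>k\<in>N-{i}. real (u i cj)) = (real (card N) - 1) * real (u i cj)"
          proof -
            have "card N \<ge> 1" using fN i by (metis One_nat_def Suc_leI card_gt_0_iff empty_iff)
            then have "real (card N - 1) = real (card N) - 1" by (simp add: of_nat_diff)
            then show ?thesis using fN i by (simp add: card_Diff_singleton)
          qed
          have Sge: "?S \<ge> real (u i ck) + (real (card N) - 1) * real (u i cj)"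
            using s1[unfolded ri] s2 s3 by linarith
          have np: "real (card N) > 0" using fN NNE by (simp add: card_gt_0_iff)
          have e: "exp_util R u C N b i = ?S / real (card N)"
            using exp_RV[OF fC fN _ rC, of i] cW RV by simp
          have SS: "?S \<ge> real (card N) * real (u i cj) + 1"
            using Sge gt by (simp add: algebra_simps)
          have "real (u i cj) + 1 / real (card N) = (real (card N) * real (u i cj) + 1) / real (card N)"
            using np by (simp add: field_simps)
          also have "\<dots> \<le> ?S / real (card N)"
            using SS np by (intro divide_right_mono) auto
          finally have "?S / real (card N) \<ge> real (u i cj) + 1 / real (card N)" .
          then show ?thesis using e eN by linarith
        qed
        have "tb_util eps R u C N b i = ereal (exp_util R u C N b i)"
          unfolding tb_util_def b_def using cki by simp
        moreover have "tb_util eps R u C N b i \<le> tb_util eps R u C N a i"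
          using P i ckC unfolding is_PNE_def b_def by blast
        ultimately show False using ta[OF i] big by simp
      qed
    qed
  next
    assume Q: "\<forall>i \<in> N. \<forall>ck \<in> Hset C N a - {top u C i}. u i ck < u i cj"
    show "is_PNE eps R u C N a" unfolding is_PNE_def
    proof (intro ballI)
      fix i b' assume i: "i \<in> N" and b': "b' \<in> Some ` C \<union> {None}"
      show "tb_util eps R u C N (a(i := b')) i \<le> tb_util eps R u C N a i"
      proof (cases b')
        case None
        then show ?thesis unfolding tb_util_def by simp
      next
        case (Some c)
        with b' have cC: "c \<in> C" by auto
        show ?thesis
        proof (cases "c = top u C i")
          case True
          then have "a(i := b') = a" using Some aA by auto
          then show ?thesis by simp
        next
          case False
          define b where "b = a(i := Some c)"
          have Wle: "\<forall>w\<in>Wset C N b. real (u i w) \<le> real (u i cj)"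
          proof
            fix w assume w: "w \<in> Wset C N b"
            then have wC: "w \<in> C" and sw: "sc N b w = maxsc C N b" by (auto simp: Wset_def)
            show "real (u i w) \<le> real (u i cj)"
            proof (cases "top u C i = cj")
              case True
              then show ?thesis using topC[OF i] wC by simp
            next
              case tij: False
              have "int (sc N b cj) \<ge> int M" using scu[OF i, of c cj] scj tij unfolding b_def by simp
              moreover have "sc N b cj \<le> maxsc C N b" by (rule sc_le_max[OF fC cjC])
              ultimately have mge: "int (sc N b w) \<ge> int M" using sw by linarith
              show ?thesis
              proof (cases "w = cj")
                case True then show ?thesis by simp
              next
                case wj: False
                have l: "sc N a w < M" by (rule lt[OF wC wj])
                have e: "int (sc N b w) = int (sc N a w) - (if top u C i = w then 1 else 0) + (if c = w then 1 else 0)"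
                  using scu[OF i, of c w] unfolding b_def by simp
                have cw: "c = w" and wt: "top u C i \<noteq> w" and s1: "sc N a w + 1 = M"
                  using e mge l by (auto split: if_splits)
                have "w \<in> Hset C N a - {top u C i}" using Hc wC s1 wt by auto
                then have "u i w < u i cj" using Q i by blast
                then show ?thesis by simp
              qed
            qed
          qed
          have "exp_util R u C N b i \<le> real (u i cj)"
            by (rule exp_le[of C N u, OF fC CNE fN NNE inj Wle])
          then have "tb_util eps R u C N b i \<le> ereal (real (u i cj) + eps)"
            unfolding tb_util_def b_def using False epos by simp
          then show ?thesis using ta[OF i] Some unfolding b_def by simp
        qed
      qed
    qed
  qed
qed

end
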